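(* Let $\varpi$ be a minuscule fundamental weight, $\bar\phi\in W/W_{P_\varpi}$ and let $\phi\in W$ be the smallest (minimal length) element of the class $\bar\phi$. Let $\phi=s_{\gamma_1}\cdots s_{\gamma_n}$ be a reduced expression with $\gamma_k$ simple roots, set $\beta_k=i(\gamma_k)$ and $\alpha_1=\beta_1$, $\alpha_k=s_{\beta_1}\cdots s_{\beta_{k-1}}(\beta_k)$ for $k\in[2,n]$. Then for all $i,j\in[1,n]$ we have $\langle\alpha_i^\vee,\alpha_j\rangle\ge 0$.
   Context: $G$ is a semisimple algebraic group with maximal torus $T$, Borel subgroup $B\supset T$, simple roots $S$, Weyl group $W$ with longest element $w_0$. For a root $\alpha$, $s_\alpha$ is the reflection and $\alpha^\vee$ the coroot. The Weyl involution $i$ sends a simple root $\beta$ to $-w_0(\beta)$ (and a fundamental weight $\varpi$ to $-w_0(\varpi)$). A fundamental weight $\varpi$ is minuscule if $\langle\alpha^\vee,\varpi\rangle\le1$ for all positive roots $\alpha$; $P_\varpi\supseteq B$ is the associated maximal parabolic subgroup and $W_{P_\varpi}$ its Weyl group. *)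

theory Defs
  imports "HOL-Analysis.Analysis"
begin

text \<open>Root-system combinatorics of a semisimple group, realised in a real Euclidean
space 'a (the real span of the character lattice of T), with the Weyl-invariant inner product.\<close>

definition refl :: "'a::euclidean_space \<Rightarrow> 'a \<Rightarrow> 'a" where
  "refl a x = x - (2 * (x \<bullet> a) / (a \<bullet> a)) *\<^sub>R a"

text \<open>copair a x is the pairing of the coroot a^vee with x.\<close>
definition copair :: "'a::euclidean_space \<Rightarrow> 'a \<Rightarrow> real" where
  "copair a x = 2 * (a \<bullet> x) / (a \<bullet> a)"

text \<open>Reduced crystallographic root system spanning the space (semisimple case).\<close>
definition root_system :: "'a::euclidean_space set \<Rightarrow> bool" where
  "root_system R \<longleftrightarrow> finite R \<and> 0 \<notin> R \<and> span R = UNIV \<and>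
     (\<forall>a\<in>R. \<forall>b\<in>R. refl a b \<in> R \<and> copair a b \<in> \<int>) \<and>
     (\<forall>a\<in>R. \<forall>c::real. c *\<^sub>R a \<in> R \<longrightarrow> c = 1 \<or> c = -1)"

definition is_base :: "'a::euclidean_space set \<Rightarrow> 'a set \<Rightarrow> bool" where
  "is_base R S \<longleftrightarrow> S \<subseteq> R \<and> independent S \<and>
     (\<forall>a\<in>R. \<exists>c. (\<forall>s\<in>S. c s \<in> \<int>) \<and> ((\<forall>s\<in>S. c s \<ge> 0) \<or> (\<forall>s\<in>S. c s \<le> 0)) \<and>
        a = (\<Sum>s\<in>S. c s *\<^sub>R s))"

definition pos_roots :: "'a::euclidean_space set \<Rightarrow> 'a set \<Rightarrow> 'a set" where
  "pos_roots R S = {a\<in>R. \<exists>c. (\<forall>s\<in>S. c s \<in> \<int> \<and> c s \<ge> 0) \<and> a = (\<Sum>s\<in>S. c s *\<^sub>R s)}"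

definition word_prod :: "'a::euclidean_space list \<Rightarrow> 'a \<Rightarrow> 'a" where
  "word_prod gs = foldr (\<lambda>g f. refl g \<circ> f) gs id"

definition weyl :: "'a::euclidean_space set \<Rightarrow> ('a \<Rightarrow> 'a) set" where
  "weyl S = word_prod ` {gs. set gs \<subseteq> S}"

definition wlen :: "'a::euclidean_space set \<Rightarrow> ('a \<Rightarrow> 'a) \<Rightarrow> nat" where
  "wlen S w = (LEAST n. \<exists>gs. set gs \<subseteq> S \<and> length gs = n \<and> word_prod gs = w)"

definition reduced_expr :: "'a::euclidean_space set \<Rightarrow> 'a list \<Rightarrow> ('a \<Rightarrow> 'a) \<Rightarrow> bool" where
  "reduced_expr S gs w \<longleftrightarrow> set gs \<subseteq> S \<and> word_prod gs = w \<and> length gs = wlen S w"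

definition longest :: "'a::euclidean_space set \<Rightarrow> 'a \<Rightarrow> 'a" where
  "longest S = (THE w. w \<in> weyl S \<and> (\<forall>v\<in>weyl S. wlen S v \<le> wlen S w))"

definition weyl_inv :: "'a::euclidean_space set \<Rightarrow> 'a \<Rightarrow> 'a" where
  "weyl_inv S b = - longest S b"

definition fund_weight :: "'a::euclidean_space set \<Rightarrow> 'a \<Rightarrow> 'a \<Rightarrow> bool" where
  "fund_weight S d w \<longleftrightarrow> (\<forall>a\<in>S. copair a w = (if a = d then 1 else 0))"

definition minuscule :: "'a::euclidean_space set \<Rightarrow> 'a set \<Rightarrow> 'a \<Rightarrow> bool" where
  "minuscule R S w \<longleftrightarrow> (\<forall>a\<in>pos_roots R S. copair a w \<le> 1)"

end

theory Submission
  imports Defs "HOL-Library.FuncSet"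
begin



definition orth :: "('a::euclidean_space \<Rightarrow> 'a) \<Rightarrow> bool" where
  "orth f \<longleftrightarrow> linear f \<and> (\<forall>x y. f x \<bullet> f y = x \<bullet> y)"

lemma refl_linear: "linear (refl a)"
proof (rule linearI)
  fix x y show "refl a (x + y) = refl a x + refl a y"
    by (simp add: refl_def inner_add_left add_divide_distrib scaleR_add_left algebra_simps)
next
  fix c x show "refl a (c *\<^sub>R x) = c *\<^sub>R refl a x"
    by (simp add: refl_def scaleR_diff_right)
qed

lemma refl_inner: "refl a x \<bullet> refl a y = x \<bullet> y"
proof (cases "a = 0")
  case True then show ?thesis by (simp add: refl_def)
next
  case False
  then have "a \<bullet> a \<noteq> 0" by simp
  then show ?thesis
    by (simp add: refl_def inner_diff_left inner_diff_right algebra_simps inner_commute power2_eq_square field_simps)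
qed

lemma refl_orth: "orth (refl a)"
  using refl_linear refl_inner orth_def by blast

lemma refl_refl[simp]: "refl a (refl a x) = x"
proof (cases "a = 0")
  case True then show ?thesis by (simp add: refl_def)
next
  case False
  then have "a \<bullet> a \<noteq> 0" by simp
  then show ?thesis
    by (simp add: refl_def inner_diff_left algebra_simps field_simps)
qed

lemma refl_self[simp]: "a \<noteq> 0 \<Longrightarrow> refl a a = - a"
  by (simp add: refl_def scaleR_2)

lemma refl_neg[simp]: "refl (- a) = refl a"
  by (rule ext) (simp add: refl_def)

lemma orth_conj: "orth w \<Longrightarrow> w (refl a x) = refl (w a) (w x)"
  unfolding orth_def refl_def by (simp add: linear_diff linear_scale)

lemma orth_comp: "orth f \<Longrightarrow> orth g \<Longrightarrow> orth (f \<circ> g)"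
  unfolding orth_def by (simp add: linear_compose)

lemma orth_id: "orth id"
  unfolding orth_def by (simp add: linear_id)

lemma word_prod_Nil[simp]: "word_prod [] = id"
  by (simp add: word_prod_def)

lemma word_prod_Cons[simp]: "word_prod (g # gs) = refl g \<circ> word_prod gs"
  by (simp add: word_prod_def)

lemma word_prod_append: "word_prod (xs @ ys) = word_prod xs \<circ> word_prod ys"
  by (induction xs) auto

lemma word_prod_orth: "orth (word_prod gs)"
proof (induction gs)
  case Nil then show ?case using orth_id by (simp add: id_def)
next
  case (Cons g gs) show ?case unfolding word_prod_Cons by (rule orth_comp[OF refl_orth Cons.IH])
qed

lemma word_prod_linear: "linear (word_prod gs)"
  using word_prod_orth orth_def by blast

lemma word_prod_rev1[simp]: "word_prod (rev gs) (word_prod gs x) = x"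
  by (induction gs arbitrary: x) (auto simp: word_prod_append)

lemma word_prod_rev2[simp]: "word_prod gs (word_prod (rev gs) x) = x"
  using word_prod_rev1[of "rev gs"] by simp

lemma copair_orth: "orth w \<Longrightarrow> copair (w x) (w y) = copair x y"
  unfolding orth_def copair_def by simp

lemma copair_neg[simp]: "copair (- x) (- y) = copair x y"
  unfolding copair_def by simp

lemma word_prod_conj:
  assumes "orth w"
  shows "word_prod (map (\<lambda>g. - w g) gs) (w y) = w (word_prod gs y)"
  by (induction gs arbitrary: y) (auto simp: orth_conj[OF assms])




locale rsys =
  fixes R S :: "'a::euclidean_space set"
  assumes rs: "root_system R" and bs: "is_base R S"
begin

lemma finR: "finite R" using rs unfolding root_system_def by (elim conjE)
lemma zR: "0 \<notin> R" using rs unfolding root_system_def by (elim conjE)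
lemma spanR: "span R = UNIV" using rs unfolding root_system_def by (elim conjE)
lemma reflR: "a \<in> R \<Longrightarrow> b \<in> R \<Longrightarrow> refl a b \<in> R"
  using rs unfolding root_system_def by (elim conjE) simp
lemma copairZ: "a \<in> R \<Longrightarrow> b \<in> R \<Longrightarrow> copair a b \<in> \<int>"
  using rs unfolding root_system_def by (elim conjE) simp
lemma reduced: "a \<in> R \<Longrightarrow> c *\<^sub>R a \<in> R \<Longrightarrow> c = 1 \<or> c = -1"
  using rs unfolding root_system_def by (elim conjE) simp
lemma SR: "S \<subseteq> R" using bs unfolding is_base_def by (elim conjE)
lemma indS: "independent S" using bs unfolding is_base_def by (elim conjE)
lemma baseD: "a \<in> R \<Longrightarrow> \<exists>c. (\<forall>s\<in>S. c s \<in> \<int>) \<and> ((\<forall>s\<in>S. c s \<ge> 0) \<or> (\<forall>s\<in>S. c s \<le> 0)) \<and>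
        a = (\<Sum>s\<in>S. c s *\<^sub>R s)"
  using bs unfolding is_base_def by (elim conjE) simp
lemma finS: "finite S" using SR finR finite_subset by blast
lemma negR: "a \<in> R \<Longrightarrow> - a \<in> R"
  using reflR[of a a] zR by (metis refl_self)
lemma spanS: "x \<in> span S"
proof -
  have "R \<subseteq> span S"
  proof
    fix a assume "a \<in> R"
    then obtain c where "a = (\<Sum>s\<in>S. c s *\<^sub>R s)" using baseD by blast
    then show "a \<in> span S" by (simp add: span_sum span_scale span_base)
  qed
  then have "span R \<subseteq> span S" by (simp add: span_minimal)
  then show ?thesis using spanR by auto
qed

definition cf :: "'a \<Rightarrow> 'a \<Rightarrow> real" where "cf x s = representation S x s"

lemma cf_add: "cf (x + y) s = cf x s + cf y s"
  unfolding cf_def using representation_add[OF indS spanS spanS] by simp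
lemma cf_scale: "cf (c *\<^sub>R x) s = c * cf x s"
  unfolding cf_def using representation_scale[OF indS spanS] by simp
lemma cf_neg: "cf (- x) s = - cf x s"
  unfolding cf_def using representation_neg[OF indS spanS] by simp
lemma cf_diff: "cf (x - y) s = cf x s - cf y s"
  unfolding cf_def using representation_diff[OF indS spanS spanS] by simp
lemma cf_sum: "cf (sum f I) s = (\<Sum>i\<in>I. cf (f i) s)"
  unfolding cf_def using representation_sum[OF indS, of I f] spanS by simp
lemma cf_basis: "t \<in> S \<Longrightarrow> cf t s = (if s = t then 1 else 0)"
  unfolding cf_def using representation_basis[OF indS] by simp
lemma cf_expand: "x = (\<Sum>s\<in>S. cf x s *\<^sub>R s)"
  unfolding cf_def using sum_representation_eq[OF indS spanS finS] by simp
lemma cf_comb: "s \<in> S \<Longrightarrow> cf (\<Sum>t\<in>S. c t *\<^sub>R t) s = c s"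
proof -
  assume s: "s \<in> S"
  have "cf (\<Sum>t\<in>S. c t *\<^sub>R t) s = (\<Sum>t\<in>S. c t * (if s = t then 1 else 0))"
    by (simp add: cf_sum cf_scale cf_basis)
  also have "\<dots> = (\<Sum>t\<in>S. if s = t then c t else 0)" by (rule sum.cong) auto
  also have "\<dots> = c s" using s finS by simp
  finally show ?thesis .
qed

lemma cf_zero: "(\<forall>s\<in>S. cf x s = 0) \<Longrightarrow> x = 0"
  using cf_expand[of x] by simp

lemma root_cf: "a \<in> R \<Longrightarrow> (\<forall>s\<in>S. cf a s \<in> \<int>) \<and> ((\<forall>s\<in>S. cf a s \<ge> 0) \<or> (\<forall>s\<in>S. cf a s \<le> 0))"
proof -
  assume "a \<in> R"
  then obtain c where c: "\<forall>s\<in>S. c s \<in> \<int>" "(\<forall>s\<in>S. c s \<ge> 0) \<or> (\<forall>s\<in>S. c s \<le> 0)"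
    "a = (\<Sum>s\<in>S. c s *\<^sub>R s)" using baseD by blast
  then have "\<forall>s\<in>S. cf a s = c s" using cf_comb by simp
  with c show ?thesis by auto
qed

definition pos :: "'a \<Rightarrow> bool" where "pos x \<longleftrightarrow> x \<in> R \<and> (\<forall>s\<in>S. cf x s \<ge> 0)"

lemma pos_or_neg: "a \<in> R \<Longrightarrow> pos a \<or> pos (- a)"
  using root_cf[of a] negR[of a] unfolding pos_def by (auto simp: cf_neg)

lemma not_pos_neg: "pos a \<Longrightarrow> pos (- a) \<Longrightarrow> False"
proof -
  assume "pos a" "pos (- a)"
  then have "\<forall>s\<in>S. cf a s = 0"
  proof (intro ballI)
    fix s assume "s \<in> S"
    then have "0 \<le> cf a s" "0 \<le> cf (- a) s" using \<open>pos a\<close> \<open>pos (- a)\<close> unfolding pos_def by auto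
    then show "cf a s = 0" by (simp add: cf_neg)
  qed
  then have "a = 0" by (rule cf_zero)
  with \<open>pos a\<close> zR show False unfolding pos_def by auto
qed

lemma pos_S: "s \<in> S \<Longrightarrow> pos s"
  unfolding pos_def using SR by (auto simp: cf_basis)

lemma pos_roots_eq: "pos_roots R S = {x. pos x}"
proof (intro set_eqI iffI)
  fix x assume "x \<in> pos_roots R S"
  then obtain c where "x \<in> R" "\<forall>s\<in>S. c s \<in> \<int> \<and> c s \<ge> 0" "x = (\<Sum>s\<in>S. c s *\<^sub>R s)"
    unfolding pos_roots_def by blast
  then show "x \<in> {x. pos x}" unfolding pos_def using cf_comb by auto
next
  fix x assume "x \<in> {x. pos x}"
  then have "pos x" by simp
  then have "x \<in> R" "\<forall>s\<in>S. cf x s \<in> \<int> \<and> cf x s \<ge> 0"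
    using root_cf unfolding pos_def by auto
  then show "x \<in> pos_roots R S" unfolding pos_roots_def using cf_expand by blast
qed

lemma pos_refl_simple:
  assumes s: "s \<in> S" and x: "pos x" and ne: "x \<noteq> s"
  shows "pos (refl s x)"
proof -
  have xR: "x \<in> R" using x pos_def by blast
  have yR: "refl s x \<in> R" using reflR SR s xR by blast
  have cfy: "cf (refl s x) t = cf x t" if "t \<in> S" "t \<noteq> s" for t
    using that unfolding refl_def cf_diff cf_scale cf_basis[OF s] by simp
  show ?thesis
  proof (cases "\<exists>t\<in>S. t \<noteq> s \<and> cf x t > 0")
    case True
    then obtain t where t: "t \<in> S" "t \<noteq> s" "cf x t > 0" by blast
    from root_cf[OF yR] have "(\<forall>u\<in>S. cf (refl s x) u \<ge> 0) \<or> (\<forall>u\<in>S. cf (refl s x) u \<le> 0)" by blast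
    moreover have "cf (refl s x) t > 0" using cfy t by simp
    ultimately have "\<forall>u\<in>S. cf (refl s x) u \<ge> 0" using t by force
    then show ?thesis using yR pos_def by blast
  next
    case False
    then have z: "\<forall>t\<in>S. t \<noteq> s \<longrightarrow> cf x t = 0" using x pos_def by force
    have "x = (\<Sum>t\<in>S. cf x t *\<^sub>R t)" by (rule cf_expand)
    also have "\<dots> = (\<Sum>t\<in>S. (if t = s then cf x s else 0) *\<^sub>R t)"
      by (rule sum.cong) (use z in auto)
    also have "\<dots> = (\<Sum>t\<in>S. if t = s then cf x s *\<^sub>R t else 0)" by (rule sum.cong) auto
    also have "\<dots> = cf x s *\<^sub>R s" using s finS by simp
    finally have xe: "x = cf x s *\<^sub>R s" .
    have "cf x s = 1 \<or> cf x s = -1" using reduced[of s "cf x s"] SR s xR xe by auto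
    moreover have "cf x s \<ge> 0" using x s pos_def by blast
    ultimately have "cf x s = 1" by linarith
    with xe ne have False by simp
    then show ?thesis ..
  qed
qed

end



context rsys begin

lemma weyl_iff: "w \<in> weyl S \<longleftrightarrow> (\<exists>gs. set gs \<subseteq> S \<and> w = word_prod gs)"
  unfolding weyl_def by blast

lemma word_R: "set gs \<subseteq> S \<Longrightarrow> x \<in> R \<Longrightarrow> word_prod gs x \<in> R"
  by (induction gs) (use SR reflR in auto)

lemma weyl_R: "w \<in> weyl S \<Longrightarrow> x \<in> R \<Longrightarrow> w x \<in> R"
  unfolding weyl_iff using word_R by blast

lemma weyl_orth: "w \<in> weyl S \<Longrightarrow> orth w"
  unfolding weyl_iff using word_prod_orth by blast

lemma weyl_linear: "w \<in> weyl S \<Longrightarrow> linear w"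
  using weyl_orth orth_def by blast

lemma wlen_le: "set gs \<subseteq> S \<Longrightarrow> wlen S (word_prod gs) \<le> length gs"
  unfolding wlen_def by (rule Least_le) blast

lemma wlen_ex: "w \<in> weyl S \<Longrightarrow> \<exists>hs. set hs \<subseteq> S \<and> length hs = wlen S w \<and> word_prod hs = w"
  unfolding wlen_def weyl_iff by (rule LeastI_ex) blast

lemma exch:
  "set gs \<subseteq> S \<Longrightarrow> s \<in> S \<Longrightarrow> pos (- word_prod gs s) \<Longrightarrow>
   \<exists>hs. set hs \<subseteq> S \<and> Suc (length hs) = length gs \<and> word_prod hs = word_prod gs \<circ> refl s"
proof (induction gs)
  case Nil
  then show ?case using pos_S not_pos_neg by (metis word_prod_Nil id_apply)
next
  case (Cons g gs)
  have gS: "g \<in> S" and gsS: "set gs \<subseteq> S" using Cons.prems by auto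
  define y where "y = word_prod gs s"
  have yR: "y \<in> R" unfolding y_def using word_R gsS SR Cons.prems(2) by blast
  show ?case
  proof (cases "pos (- y)")
    case True
    then obtain hs where hs: "set hs \<subseteq> S" "Suc (length hs) = length gs"
      "word_prod hs = word_prod gs \<circ> refl s" using Cons.IH gsS Cons.prems(2) y_def by blast
    show ?thesis
      by (rule exI[of _ "g # hs"]) (use hs gS in \<open>auto simp: comp_assoc\<close>)
  next
    case False
    then have py: "pos y" using pos_or_neg yR by blast
    have "y = g"
    proof (rule ccontr)
      assume "y \<noteq> g"
      then have "pos (refl g y)" using pos_refl_simple gS py by blast
      moreover have "pos (- refl g y)" using Cons.prems(3) y_def by simp
      ultimately show False using not_pos_neg by blast
    qed
    have c: "word_prod gs \<circ> refl s = refl g \<circ> word_prod gs"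
      by (rule ext) (simp add: orth_conj[OF word_prod_orth] \<open>y = g\<close>[unfolded y_def])
    have "word_prod (g # gs) \<circ> refl s = word_prod gs"
      by (rule ext) (simp add: c[unfolded fun_eq_iff, simplified])
    then show ?thesis using gsS by (intro exI[of _ gs]) (simp add: comp_def fun_eq_iff)
  qed
qed

lemma len_down:
  assumes w: "w \<in> weyl S" and s: "s \<in> S" and n: "pos (- w s)"
  shows "wlen S (w \<circ> refl s) < wlen S w"
proof -
  obtain hs where hs: "set hs \<subseteq> S" "length hs = wlen S w" "word_prod hs = w"
    using wlen_ex w by blast
  obtain hs' where hs': "set hs' \<subseteq> S" "Suc (length hs') = length hs" "word_prod hs' = w \<circ> refl s"
    using exch[OF hs(1) s] n hs(3) by blast
  have "wlen S (w \<circ> refl s) \<le> length hs'" using wlen_le[OF hs'(1)] hs'(3) by simp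
  then show ?thesis using hs'(2) hs(2) by simp
qed

lemma weyl_comp_refl: "w \<in> weyl S \<Longrightarrow> s \<in> S \<Longrightarrow> w \<circ> refl s \<in> weyl S"
proof -
  assume "w \<in> weyl S" "s \<in> S"
  then obtain gs where "set gs \<subseteq> S" "w = word_prod gs" using weyl_iff by blast
  then have "w \<circ> refl s = word_prod (gs @ [s])" "set (gs @ [s]) \<subseteq> S"
    using \<open>s \<in> S\<close> by (auto simp: word_prod_append)
  then show ?thesis using weyl_iff by blast
qed

lemma len_up:
  assumes w: "w \<in> weyl S" and s: "s \<in> S" and p: "pos (w s)"
  shows "wlen S w < wlen S (w \<circ> refl s)"
proof -
  have w': "w \<circ> refl s \<in> weyl S" using weyl_comp_refl w s by blast
  have s0: "s \<noteq> 0" using s SR zR by blast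
  have "(w \<circ> refl s) s = - w s" using s0 linear_neg[OF weyl_linear[OF w]] by simp
  then have "pos (- (w \<circ> refl s) s)" using p by simp
  from len_down[OF w' s this] have "wlen S (w \<circ> refl s \<circ> refl s) < wlen S (w \<circ> refl s)" .
  moreover have "w \<circ> refl s \<circ> refl s = w" by (rule ext) simp
  ultimately show ?thesis by simp
qed

lemma reduced_pos:
  assumes gs: "set gs \<subseteq> S" and red: "length gs = wlen S (word_prod gs)" and k: "k < length gs"
  shows "pos (word_prod (take k gs) (gs ! k))"
proof -
  have gk: "gs ! k \<in> S" using gs k nth_mem by blast
  have tk: "set (take k gs) \<subseteq> S" using gs set_take_subset by fast
  have dk: "set (drop (Suc k) gs) \<subseteq> S" using gs set_drop_subset by fast
  have yR: "word_prod (take k gs) (gs ! k) \<in> R" using word_R[OF tk] gk SR by blast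
  show ?thesis
  proof (rule ccontr)
    assume "\<not> ?thesis"
    then have "pos (- word_prod (take k gs) (gs ! k))" using pos_or_neg yR by blast
    then obtain hs where hs: "set hs \<subseteq> S" "Suc (length hs) = length (take k gs)"
      "word_prod hs = word_prod (take k gs) \<circ> refl (gs ! k)"
      using exch[OF tk gk] by blast
    have e: "gs = take k gs @ gs ! k # drop (Suc k) gs" using k by (simp add: id_take_nth_drop)
    have "word_prod (hs @ drop (Suc k) gs) = word_prod gs"
      by (subst (2) e) (simp add: word_prod_append hs(3) comp_assoc)
    moreover have "set (hs @ drop (Suc k) gs) \<subseteq> S" using hs(1) dk by simp
    ultimately have "wlen S (word_prod gs) \<le> length (hs @ drop (Suc k) gs)"
      using wlen_le by metis
    moreover have "length (hs @ drop (Suc k) gs) < length gs" using hs(2) k by simp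
    ultimately show False using red by simp
  qed
qed

lemma rev_reduced:
  assumes gs: "set gs \<subseteq> S" and red: "length gs = wlen S (word_prod gs)"
  shows "length (rev gs) = wlen S (word_prod (rev gs))"
proof -
  have rS: "set (rev gs) \<subseteq> S" using gs by simp
  have le: "wlen S (word_prod (rev gs)) \<le> length (rev gs)" using wlen_le[OF rS] .
  have "word_prod (rev gs) \<in> weyl S" using rS weyl_iff by blast
  then obtain hs where hs: "set hs \<subseteq> S" "length hs = wlen S (word_prod (rev gs))"
    "word_prod hs = word_prod (rev gs)" using wlen_ex by blast
  have "word_prod (rev hs) = word_prod gs"
  proof (rule ext)
    fix x
    have "word_prod hs (word_prod gs x) = x" using hs(3) by simp
    then have "word_prod (rev hs) (word_prod hs (word_prod gs x)) = word_prod (rev hs) x" by simp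
    then show "word_prod (rev hs) x = word_prod gs x" by simp
  qed
  then have "wlen S (word_prod gs) \<le> length (rev hs)" using wlen_le[of "rev hs"] hs(1) by simp
  then show ?thesis using le hs(2) red by simp
qed

end



context rsys begin

lemma fin_weyl: "finite (weyl S)"
proof -
  have inj: "inj_on (\<lambda>w. restrict w R) (weyl S)"
  proof (rule inj_onI)
    fix v w assume v: "v \<in> weyl S" and w: "w \<in> weyl S" and e: "restrict v R = restrict w R"
    have "\<forall>x\<in>R. v x = w x" using e by (metis restrict_apply')
    show "v = w"
    proof (rule ext)
      fix x
      show "v x = w x"
        using real_vector.linear_eq_on_span[OF weyl_linear[OF v] weyl_linear[OF w], of R x]
          \<open>\<forall>x\<in>R. v x = w x\<close> spanR by auto
    qed
  qed
  have "(\<lambda>w. restrict w R) ` weyl S \<subseteq> (\<Pi>\<^sub>E i\<in>R. R)"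
  proof (rule image_subsetI)
    fix w assume "w \<in> weyl S"
    then have "\<forall>i\<in>R. w i \<in> R" using weyl_R by blast
    then show "restrict w R \<in> (\<Pi>\<^sub>E i\<in>R. R)" by (simp add: restrict_PiE_iff)
  qed
  moreover have "finite (\<Pi>\<^sub>E i\<in>R. R)" by (intro finite_PiE finR)
  ultimately have "finite ((\<lambda>w. restrict w R) ` weyl S)" using finite_subset by blast
  then show ?thesis using finite_imageD inj by blast
qed

lemma cf_lin: "linear f \<Longrightarrow> cf (f x) t = (\<Sum>s\<in>S. cf x s * cf (f s) t)"
proof -
  assume f: "linear f"
  have "f x = f (\<Sum>s\<in>S. cf x s *\<^sub>R s)" using cf_expand[of x] by simp
  also have "\<dots> = (\<Sum>s\<in>S. cf x s *\<^sub>R f s)" using f by (simp add: linear_sum linear_scale)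
  finally show ?thesis by (simp add: cf_sum cf_scale)
qed

lemma max_neg:
  assumes w: "w \<in> weyl S" and mx: "\<forall>v\<in>weyl S. wlen S v \<le> wlen S w" and s: "s \<in> S"
  shows "pos (- w s)"
proof (rule ccontr)
  assume "\<not> pos (- w s)"
  then have "pos (w s)" using pos_or_neg weyl_R[OF w] s SR by blast
  then have "wlen S w < wlen S (w \<circ> refl s)" using len_up w s by blast
  moreover have "wlen S (w \<circ> refl s) \<le> wlen S w" using mx weyl_comp_refl w s by blast
  ultimately show False by simp
qed

lemma lin_neg:
  assumes f: "linear f" and fx: "f x \<in> R" and x: "pos x" and n: "\<forall>s\<in>S. pos (- f s)"
  shows "pos (- f x)"
proof -
  have "cf (- f x) t \<ge> 0" if t: "t \<in> S" for t
  proof -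
    have "cf (- f x) t = - (\<Sum>s\<in>S. cf x s * cf (f s) t)"
      using cf_lin[OF f, of x t] by (simp only: cf_neg)
    also have "\<dots> = (\<Sum>s\<in>S. cf x s * cf (- f s) t)"
      by (simp only: cf_neg sum_negf[symmetric] mult_minus_right)
    also have "\<dots> \<ge> 0"
      using x n t unfolding pos_def by (intro sum_nonneg mult_nonneg_nonneg) auto
    finally show ?thesis .
  qed
  then show ?thesis using negR fx pos_def by blast
qed

lemma id_char:
  assumes u: "u \<in> weyl S" and p: "\<forall>s\<in>S. pos (u s)"
  shows "u = id"
proof -
  obtain hs where hs: "set hs \<subseteq> S" "length hs = wlen S u" "word_prod hs = u"
    using wlen_ex u by blast
  show ?thesis
  proof (cases hs rule: rev_exhaust)
    case Nil then show ?thesis using hs by simp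
  next
    case (snoc hs' s)
    have s: "s \<in> S" and hs': "set hs' \<subseteq> S" using hs(1) snoc by auto
    have "u = word_prod hs' \<circ> refl s" using hs(3) snoc by (simp add: word_prod_append)
    then have "u \<circ> refl s = word_prod hs'" by (simp add: fun_eq_iff)
    then have "wlen S (u \<circ> refl s) \<le> length hs'" using wlen_le[OF hs'] by simp
    moreover have "wlen S u < wlen S (u \<circ> refl s)" using len_up u s p by blast
    ultimately show ?thesis using hs(2) snoc by simp
  qed
qed

lemma longest_unique: "\<exists>!w. w \<in> weyl S \<and> (\<forall>v\<in>weyl S. wlen S v \<le> wlen S w)"
proof -
  have ne: "id \<in> weyl S" using weyl_iff[of id] by (metis empty_subsetI empty_set word_prod_Nil)
  define M where "M = Max (wlen S ` weyl S)"
  have "M \<in> wlen S ` weyl S" unfolding M_def using fin_weyl ne by (intro Max_in) auto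
  then obtain w0 where w0: "w0 \<in> weyl S" "wlen S w0 = M" by blast
  have mx: "\<forall>v\<in>weyl S. wlen S v \<le> wlen S w0" using w0 fin_weyl M_def by auto
  show ?thesis
  proof (rule ex1I[of _ w0])
    show "w0 \<in> weyl S \<and> (\<forall>v\<in>weyl S. wlen S v \<le> wlen S w0)" using w0 mx by blast
  next
    fix w1 assume w1: "w1 \<in> weyl S \<and> (\<forall>v\<in>weyl S. wlen S v \<le> wlen S w1)"
    obtain g0 where g0: "set g0 \<subseteq> S" "w0 = word_prod g0" using w0 weyl_iff by blast
    obtain g1 where g1: "set g1 \<subseteq> S" "w1 = word_prod g1" using w1 weyl_iff by blast
    define u where "u = word_prod (rev g0) \<circ> w1"
    have uW: "u \<in> weyl S" unfolding u_def weyl_iff using g0 g1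
      by (intro exI[of _ "rev g0 @ g1"]) (auto simp: word_prod_append)
    have n1: "pos (- w1 s)" if "s \<in> S" for s using max_neg w1 that by blast
    have n0: "pos (- w0 s)" if "s \<in> S" for s using max_neg w0(1) mx that by blast
    have n0': "pos (- w0 x)" if "pos x" for x
      using lin_neg[OF weyl_linear[OF w0(1)] weyl_R[OF w0(1)]] that n0 pos_def by blast
    have "pos (u s)" if s: "s \<in> S" for s
    proof -
      define z where "z = - w1 s"
      have pz: "pos z" using n1 s z_def by blast
      define y where "y = word_prod (rev g0) z"
      have yR: "y \<in> R" unfolding y_def using word_R g0(1) pz pos_def by auto
      have "\<not> pos y"
      proof
        assume "pos y"
        then have "pos (- w0 y)" using n0' by blast
        moreover have "w0 y = z" unfolding y_def g0(2) by simp
        ultimately show False using pz not_pos_neg by simp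
      qed
      then have "pos (- y)" using pos_or_neg yR by blast
      moreover have "word_prod (rev g0) (- w1 s) = - word_prod (rev g0) (w1 s)"
        by (rule linear_neg[OF word_prod_linear])
      then have "- y = u s" unfolding y_def z_def u_def by simp
      ultimately show ?thesis by simp
    qed
    then have "u = id" using id_char uW by blast
    show "w1 = w0"
    proof (rule ext)
      fix x
      have "w1 x = word_prod g0 (word_prod (rev g0) (w1 x))" by simp
      also have "\<dots> = word_prod g0 (u x)" unfolding u_def by simp
      also have "\<dots> = w0 x" using \<open>u = id\<close> g0(2) by simp
      finally show "w1 x = w0 x" .
    qed
  qed
qed

lemma longest_weyl: "longest S \<in> weyl S"
  unfolding longest_def using theI'[OF longest_unique] by blast

lemma longest_orth: "orth (longest S)"
  using weyl_orth longest_weyl by blast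

end



lemma int_pos_ge1: "(r::real) \<in> \<int> \<Longrightarrow> r > 0 \<Longrightarrow> r \<ge> 1"
  using Ints_nonzero_abs_ge1[of r] by simp

lemma int_neg_le1: "(r::real) \<in> \<int> \<Longrightarrow> r < 0 \<Longrightarrow> r \<le> -1"
  using Ints_nonzero_abs_ge1[of r] by simp

lemma copair_refl:
  assumes "a \<noteq> 0" "b \<noteq> 0"
  shows "copair (refl a b) w = copair b w - copair a w * copair b a"
proof -
  have aa: "a \<bullet> a \<noteq> 0" "b \<bullet> b \<noteq> 0" using assms by auto
  have i2: "refl a b \<bullet> refl a b = b \<bullet> b" by (rule refl_inner)
  have i1: "refl a b \<bullet> w = b \<bullet> w - (2 * (b \<bullet> a) / (a \<bullet> a)) * (a \<bullet> w)"
    by (simp add: refl_def inner_diff_left)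
  show ?thesis using aa
    unfolding copair_def i2 i1
    by (simp add: inner_commute field_simps)
qed

context rsys begin

lemma simple_pos_phi:
  assumes phi: "phi \<in> weyl S" and hyp: "\<forall>u\<in>weyl (S - {d}). wlen S phi \<le> wlen S (phi \<circ> u)"
    and s: "s \<in> S" "s \<noteq> d"
  shows "pos (phi s)"
proof (rule ccontr)
  assume "\<not> pos (phi s)"
  then have "pos (- phi s)" using pos_or_neg weyl_R[OF phi] s SR by blast
  then have "wlen S (phi \<circ> refl s) < wlen S phi" using len_down phi s by blast
  moreover have "refl s \<in> weyl (S - {d})" unfolding weyl_def
    using s by (intro image_eqI[of _ _ "[s]"]) auto
  ultimately show False using hyp by fastforce
qed

lemma phi_pos_d0:
  assumes f: "linear f" and fx: "f x \<in> R" and ps: "\<forall>s\<in>S. s \<noteq> d \<longrightarrow> pos (f s)"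
    and x: "pos x" and xd: "cf x d = 0"
  shows "pos (f x)"
proof -
  have "cf (f x) t \<ge> 0" if t: "t \<in> S" for t
  proof -
    have "cf (f x) t = (\<Sum>s\<in>S. cf x s * cf (f s) t)" by (rule cf_lin[OF f])
    also have "\<dots> \<ge> 0"
    proof (rule sum_nonneg)
      fix s assume s: "s \<in> S"
      show "0 \<le> cf x s * cf (f s) t"
      proof (cases "s = d")
        case True then show ?thesis using xd by simp
      next
        case False then show ?thesis using x ps s t unfolding pos_def by simp
      qed
    qed
    finally show ?thesis .
  qed
  then show ?thesis using fx pos_def by blast
qed

definition ht :: "'a \<Rightarrow> real" where "ht x = (\<Sum>s\<in>S. cf x s)"

lemma inner_expand: "x \<bullet> v = (\<Sum>s\<in>S. cf x s * (s \<bullet> v))"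
proof -
  have "x \<bullet> v = (\<Sum>s\<in>S. cf x s *\<^sub>R s) \<bullet> v" using cf_expand[of x] by simp
  also have "\<dots> = (\<Sum>s\<in>S. cf x s * (s \<bullet> v))" by (simp add: inner_sum_left)
  finally show ?thesis .
qed

lemma p_int_aux:
  assumes dS: "d \<in> S" and fw: "fund_weight S d varpi"
  shows "pos x \<Longrightarrow> ht x \<le> real n \<Longrightarrow> copair x varpi \<in> \<int>"
proof (induction n arbitrary: x)
  case 0
  have "\<forall>s\<in>S. cf x s = 0"
  proof -
    have "\<forall>s\<in>S. cf x s \<ge> 0" using 0 pos_def by blast
    moreover have "(\<Sum>s\<in>S. cf x s) = 0" using 0 calculation unfolding ht_def
      by (metis of_nat_0 order_antisym sum_nonneg)
    ultimately show ?thesis using sum_nonneg_eq_0_iff[OF finS] by blast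
  qed
  then have "x = 0" by (rule cf_zero)
  then show ?case using 0 zR pos_def by blast
next
  case (Suc n)
  have xR: "x \<in> R" using Suc.prems pos_def by blast
  have x0: "x \<noteq> 0" using xR zR by blast
  show ?case
  proof (cases "x \<in> S")
    case True
    then show ?thesis using fw unfolding fund_weight_def by (cases "x = d") auto
  next
    case False
    have "\<exists>s\<in>S. x \<bullet> s > 0"
    proof (rule ccontr)
      assume "\<not> ?thesis"
      then have "\<forall>s\<in>S. x \<bullet> s \<le> 0" by auto
      then have "(\<Sum>s\<in>S. cf x s * (s \<bullet> x)) \<le> 0"
        using Suc.prems pos_def by (intro sum_nonpos) (simp add: inner_commute mult_nonneg_nonpos)
      then have "x \<bullet> x \<le> 0" using inner_expand[of x x] by simp
      then show False using x0 by (metis inner_gt_zero_iff not_le)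
    qed
    then obtain s where s: "s \<in> S" "x \<bullet> s > 0" by blast
    have sR: "s \<in> R" using s SR by blast
    have s0: "s \<noteq> 0" using sR zR by blast
    define y where "y = refl s x"
    have py: "pos y" unfolding y_def using pos_refl_simple[OF s(1) Suc.prems(1)] False s by blast
    have yR: "y \<in> R" using py pos_def by blast
    have y0: "y \<noteq> 0" using yR zR by blast
    have cZ: "copair s x \<in> \<int>" using copairZ sR xR by blast
    have cpos: "copair s x > 0" using s s0 unfolding copair_def by (simp add: inner_commute)
    have c1: "copair s x \<ge> 1" using cZ cpos by (rule int_pos_ge1)
    have "ht y = ht x - copair s x"
    proof -
      have "y = x - copair s x *\<^sub>R s" unfolding y_def refl_def copair_def by (simp add: inner_commute)
      then have "cf y t = cf x t - copair s x * (if t = s then 1 else 0)" if "t \<in> S" for t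
        using cf_basis[OF s(1), of t] by (simp add: cf_diff cf_scale)
      then have "ht y = (\<Sum>t\<in>S. cf x t - copair s x * (if t = s then 1 else 0))"
        unfolding ht_def by (intro sum.cong) auto
      also have "\<dots> = ht x - (\<Sum>t\<in>S. copair s x * (if t = s then 1 else 0))"
        unfolding ht_def by (simp add: sum_subtractf)
      also have "(\<Sum>t\<in>S. copair s x * (if t = s then 1 else 0)) = copair s x"
        using s(1) finS by (simp add: if_distrib[of "(*) (copair s x)"] cong: if_cong)
      finally show ?thesis .
    qed
    then have "ht y \<le> real n" using Suc.prems(2) c1 by simp
    then have yZ: "copair y varpi \<in> \<int>" using Suc.IH py by blast
    have "x = refl s y" unfolding y_def by simp
    then have "copair x varpi = copair y varpi - copair s varpi * copair y s"
      using copair_refl[OF s0 y0] by simp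
    moreover have "copair s varpi \<in> \<int>" using fw s(1) unfolding fund_weight_def by simp
    moreover have "copair y s \<in> \<int>" using copairZ yR sR by blast
    ultimately show ?thesis using yZ by (simp add: Ints_diff Ints_mult)
  qed
qed

lemma p_int:
  assumes "d \<in> S" "fund_weight S d varpi" "pos x"
  shows "copair x varpi \<in> \<int>"
  using p_int_aux[OF assms(1,2) assms(3), of "nat \<lceil>ht x\<rceil>"] by linarith

lemma p_pos:
  assumes dS: "d \<in> S" and fw: "fund_weight S d varpi" and x: "pos x" and xd: "cf x d > 0"
  shows "copair x varpi > 0"
proof -
  have sv: "s \<bullet> varpi = (if s = d then (d \<bullet> d) / 2 else 0)" if "s \<in> S" for s
  proof -
    have s0: "s \<noteq> 0" using that SR zR by blast
    have "copair s varpi = (if s = d then 1 else 0)" using fw that unfolding fund_weight_def by blast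
    then show ?thesis using s0 unfolding copair_def by (auto simp: field_simps split: if_splits)
  qed
  have "x \<bullet> varpi = (\<Sum>s\<in>S. cf x s * (if s = d then (d \<bullet> d) / 2 else 0))"
    using inner_expand[of x varpi] sv by (simp cong: sum.cong)
  also have "\<dots> = (\<Sum>s\<in>S. if s = d then cf x s * ((d \<bullet> d) / 2) else 0)"
    by (rule sum.cong) auto
  also have "\<dots> = cf x d * ((d \<bullet> d) / 2)" using dS finS by simp
  finally have "x \<bullet> varpi = cf x d * ((d \<bullet> d) / 2)" .
  moreover have "d \<noteq> 0" using dS SR zR by blast
  moreover have "x \<noteq> 0" using x pos_def zR by blast
  ultimately have dd: "d \<bullet> d > 0" and xx: "x \<bullet> x > 0" and eq: "x \<bullet> varpi = cf x d * ((d \<bullet> d) / 2)" by auto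
  have "cf x d * ((d \<bullet> d) / 2) > 0" using xd dd by simp
  then have "x \<bullet> varpi > 0" using eq by simp
  then show ?thesis using xx unfolding copair_def by simp
qed

lemma pairing:
  assumes mi: "minuscule R S varpi" and y: "pos y" and z: "pos z"
    and py: "copair y varpi \<ge> 1" and pz: "copair z varpi \<ge> 1"
  shows "copair y z \<ge> 0"
proof (rule ccontr)
  assume "\<not> ?thesis"
  then have neg: "copair y z < 0" by simp
  have yR: "y \<in> R" and zR': "z \<in> R" using y z pos_def by auto
  have y0: "y \<noteq> 0" and z0: "z \<noteq> 0" using yR zR' zR by auto
  define u where "u = refl y z"
  have uR: "u \<in> R" unfolding u_def using reflR yR zR' by blast
  have ue: "u = z - copair y z *\<^sub>R y" unfolding u_def refl_def copair_def by (simp add: inner_commute)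
  have "pos u"
  proof -
    have "cf u t \<ge> 0" if "t \<in> S" for t
    proof -
      have "cf u t = cf z t - copair y z * cf y t" unfolding ue by (simp add: cf_diff cf_scale)
      moreover have "cf z t \<ge> 0" "cf y t \<ge> 0" using y z that pos_def by auto
      moreover have "copair y z * cf y t \<le> 0" using neg \<open>cf y t \<ge> 0\<close> by (simp add: mult_nonpos_nonneg)
      ultimately show ?thesis by linarith
    qed
    then show ?thesis using uR pos_def by blast
  qed
  then have "copair u varpi \<le> 1" using mi pos_roots_eq unfolding minuscule_def by blast
  moreover have "copair u varpi = copair z varpi - copair y varpi * copair z y"
    unfolding u_def by (rule copair_refl[OF y0 z0])
  moreover have "copair z y \<le> -1"
  proof -
    have yy: "y \<bullet> y > 0" using y0 by simp
    have "y \<bullet> z < 0" using neg yy unfolding copair_def by (simp add: divide_less_0_iff)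
    then have "copair z y < 0" using z0 unfolding copair_def by (simp add: inner_commute divide_less_0_iff)
    moreover have "copair z y \<in> \<int>" using copairZ zR' yR by blast
    ultimately show ?thesis using int_neg_le1 by blast
  qed
  ultimately have "copair z varpi + copair y varpi \<le> 1"
    using py by (smt (verit) mult_le_cancel_left1 mult_minus_right)
  then show False using py pz by simp
qed

end



theorem mainTheorem3:
  fixes R S :: "'a::euclidean_space set" and d varpi :: 'a
    and phi :: "'a \<Rightarrow> 'a" and gam :: "'a list"
  assumes "root_system R" and "is_base R S"
    and "d \<in> S" and "fund_weight S d varpi" and "minuscule R S varpi"
    and "phi \<in> weyl S"
    and "\<forall>u\<in>weyl (S - {d}). wlen S phi \<le> wlen S (phi \<circ> u)"
    and "reduced_expr S gam phi"
  defines "bet \<equiv> map (weyl_inv S) gam"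
  defines "alph \<equiv> (\<lambda>k. word_prod (take k bet) (bet ! k))"
  shows "\<forall>i < length gam. \<forall>j < length gam. copair (alph i) (alph j) \<ge> 0"
proof -
  interpret rsys R S using assms(1,2) by unfold_locales
  have gS: "set gam \<subseteq> S" and wp: "word_prod gam = phi" and red: "length gam = wlen S (word_prod gam)"
    using assms(8) unfolding reduced_expr_def by auto
  define n where "n = length gam"
  define w0 where "w0 = longest S"
  have ow: "orth w0" unfolding w0_def by (rule longest_orth)
  have lw0: "linear w0" using ow orth_def by blast
  have phiW: "phi \<in> weyl S" using assms(6) .
  have lphi: "linear phi" using weyl_linear[OF phiW] .
  define A where "A k = word_prod (take k gam) (gam ! k)" for k
  define B where "B k = word_prod (rev (drop (Suc k) gam)) (gam ! k)" for k
  have betm: "bet = map (\<lambda>g. - w0 g) gam" unfolding bet_def w0_def weyl_inv_def by simp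
  have alphA: "alph k = - w0 (A k)" if k: "k < n" for k
  proof -
    have "take k bet = map (\<lambda>g. - w0 g) (take k gam)" unfolding betm by (simp add: take_map)
    moreover have "bet ! k = w0 (- (gam ! k))" unfolding betm using k n_def linear_neg[OF lw0] by simp
    ultimately have "alph k = w0 (word_prod (take k gam) (- (gam ! k)))"
      unfolding alph_def using word_prod_conj[OF ow] by simp
    also have "\<dots> = w0 (- A k)" unfolding A_def
      using linear_neg[OF word_prod_linear, of "take k gam" "gam ! k"] by (simp only:)
    also have "\<dots> = - w0 (A k)" using linear_neg[OF lw0] by simp
    finally show ?thesis .
  qed
  have phiB: "phi (B k) = - A k" if k: "k < n" for k
  proof -
    have "gam ! k \<in> set gam" using k n_def by simp
    then have "gam ! k \<in> R" using gS SR by blast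
    then have gk: "gam ! k \<noteq> 0" using zR by metis
    have kl: "k < length gam" using k n_def by simp
    have e: "gam = take k gam @ gam ! k # drop (Suc k) gam" by (rule id_take_nth_drop[OF kl])
    have e2: "take k gam @ gam ! k # drop (Suc k) gam = gam" using e by (rule sym)
    have "word_prod (take k gam @ gam ! k # drop (Suc k) gam) =
      word_prod (take k gam) \<circ> refl (gam ! k) \<circ> word_prod (drop (Suc k) gam)"
      by (simp add: word_prod_append comp_assoc)
    then have "phi = word_prod (take k gam) \<circ> refl (gam ! k) \<circ> word_prod (drop (Suc k) gam)"
      unfolding e2 wp .
    then have "phi (B k) = word_prod (take k gam) (refl (gam ! k) (gam ! k))"
      unfolding B_def by simp
    also have "\<dots> = word_prod (take k gam) (- (gam ! k))" using gk by simp
    also have "\<dots> = - A k" unfolding A_def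
      using linear_neg[OF word_prod_linear, of "take k gam" "gam ! k"] by (simp only:)
    finally show ?thesis .
  qed
  have posA: "pos (A k)" if "k < n" for k
    unfolding A_def using reduced_pos[OF gS red] that n_def by blast
  have posB: "pos (B k)" if k: "k < n" for k
  proof -
    have rS: "set (rev gam) \<subseteq> S" using gS by simp
    have rr: "length (rev gam) = wlen S (word_prod (rev gam))" using rev_reduced[OF gS red] .
    have i: "n - Suc k < length (rev gam)" using k n_def by simp
    have "pos (word_prod (take (n - Suc k) (rev gam)) (rev gam ! (n - Suc k)))"
      using reduced_pos[OF rS rr i] .
    moreover have "take (n - Suc k) (rev gam) = rev (drop (Suc k) gam)"
      using k n_def by (simp add: take_rev)
    moreover have "rev gam ! (n - Suc k) = gam ! k"
      using k n_def by (simp add: rev_nth)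
    ultimately show ?thesis unfolding B_def by simp
  qed
  have ps: "\<forall>s\<in>S. s \<noteq> d \<longrightarrow> pos (phi s)"
    using simple_pos_phi[OF phiW assms(7)] by blast
  have pB: "copair (B k) varpi \<ge> 1" if k: "k < n" for k
  proof -
    have "cf (B k) d \<ge> 0" using posB[OF k] assms(3) pos_def by blast
    moreover have "cf (B k) d \<noteq> 0"
    proof
      assume "cf (B k) d = 0"
      moreover have "phi (B k) \<in> R" using weyl_R[OF phiW] posB[OF k] pos_def by blast
      ultimately have "pos (phi (B k))" using phi_pos_d0[OF lphi _ ps posB[OF k]] by blast
      then have "pos (- A k)" using phiB[OF k] by simp
      then show False using posA[OF k] not_pos_neg by blast
    qed
    ultimately have "cf (B k) d > 0" by simp
    then have "copair (B k) varpi > 0" using p_pos[OF assms(3,4) posB[OF k]] by blast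
    moreover have "copair (B k) varpi \<in> \<int>" using p_int[OF assms(3,4) posB[OF k]] .
    ultimately show ?thesis using int_pos_ge1 by blast
  qed
  show ?thesis
  proof (intro allI impI)
    fix i j assume i: "i < length gam" and j: "j < length gam"
    then have i': "i < n" and j': "j < n" using n_def by auto
    have "copair (alph i) (alph j) = copair (A i) (A j)"
      using alphA[OF i'] alphA[OF j'] copair_orth[OF ow] by simp
    also have "\<dots> = copair (- A i) (- A j)" by simp
    also have "\<dots> = copair (phi (B i)) (phi (B j))" using phiB[OF i'] phiB[OF j'] by simp
    also have "\<dots> = copair (B i) (B j)" using copair_orth[OF weyl_orth[OF phiW]] by simp
    finally have e: "copair (alph i) (alph j) = copair (B i) (B j)" .
    show "copair (alph i) (alph j) \<ge> 0"
      unfolding e using pairing[OF assms(5) posB[OF i'] posB[OF j'] pB[OF i'] pB[OF j']] .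
  qed
qed



end
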